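(* For Lebesgue-almost every $x\in(0,3)$, $k_x(\varepsilon)\sim\log_{2/3}|\varepsilon|$ as $\varepsilon\to0$, i.e. $k_x(\varepsilon)/\log_{2/3}|\varepsilon|\to1$.
   Context: Let $T=T_{2/3}:[0,3]\to[0,3]$ be given by $T(x)=\frac32(x+1)$ for $0\le x<1$ and $T(x)=\frac32(x-1)$ for $1\le x\le3$ (so $T(1)=0$). For $x\in[0,3]$ and $n\ge0$ let $\delta_n(x)=\mathbb 1\{T^n(x)<1\}$. For $x\in[0,3]$ and real $\varepsilon\ne0$ with $x+\varepsilon\in[0,3]$, let $k_x(\varepsilon)=\min\{n\ge0:\delta_n(x)\neq\delta_n(x+\varepsilon)\}$. *)

theory Defs
  imports "HOL-Analysis.Analysis"
begin

text \<open>The map T_{2/3} on [0,3]: T(x) = 3/2 (x+1) for 0 <= x < 1, T(x) = 3/2 (x-1) for 1 <= x <= 3.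
  Values outside [0,3] are irrelevant (orbits of points of [0,3] stay in [0,3]).\<close>
definition T :: "real \<Rightarrow> real" where
  "T x = (if x < 1 then 3/2 * (x + 1) else 3/2 * (x - 1))"

definition delta :: "nat \<Rightarrow> real \<Rightarrow> bool" where
  "delta n x = ((T ^^ n) x < 1)"

definition kx :: "real \<Rightarrow> real \<Rightarrow> nat" where
  "kx x \<epsilon> = (LEAST n. delta n x \<noteq> delta n (x + \<epsilon>))"

end

theory Submission
  imports Defs
begin


lemma T_range: "x \<in> {0..3} \<Longrightarrow> T x \<in> {0..3}"
  unfolding T_def by auto

lemma Tn_range: "x \<in> {0..3} \<Longrightarrow> (T ^^ n) x \<in> {0..3}"
  using T_range by (induction n) auto

lemma T_meas[measurable]: "T \<in> borel_measurable borel"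
  unfolding T_def[abs_def] by measurable

lemma Tn_meas[measurable]: "(T ^^ n) \<in> borel_measurable borel"
  by (induction n) auto

lemma aff:
  assumes c: "c > 0" and B[measurable]: "B \<in> sets borel"
  shows "emeasure lborel ((\<lambda>x. t + c * x) -` B) = ennreal (1/c) * emeasure lborel B"
proof -
  have "emeasure lborel B = ennreal c * emeasure lborel ((\<lambda>x. t + c * x) -` B)"
    using c
    by (subst lborel_real_affine[of c t]) (auto simp: emeasure_density emeasure_distr nn_integral_cmult_indicator)
  then show ?thesis using c
    by (simp add: ennreal_mult[symmetric] mult.assoc[symmetric])
qed


lemma aff_pre[measurable]: "B \<in> sets borel \<Longrightarrow> (\<lambda>x::real. t + c * x) -` B \<in> sets borel"
proof -
  assume B: "B \<in> sets borel"
  have m: "(\<lambda>x::real. t + c * x) \<in> borel_measurable borel" by measurable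
  show ?thesis using measurable_sets[OF m B] by simp
qed

definition Gs :: "real set \<Rightarrow> real set" where "Gs A = {x\<in>{0..3}. T x \<in> A}"

lemma Gs_meas[measurable]: "A \<in> sets borel \<Longrightarrow> Gs A \<in> sets borel"
proof -
  assume A: "A \<in> sets borel"
  have "T -` A \<in> sets borel" using measurable_sets[OF T_meas A] by simp
  moreover have "Gs A = T -` A \<inter> {0..3}" unfolding Gs_def by auto
  ultimately show ?thesis by simp
qed

lemma T_lt1: "x < 1 \<Longrightarrow> T x = 3/2 + 3/2 * x" unfolding T_def by simp
lemma T_ge1: "\<not> x < 1 \<Longrightarrow> T x = -3/2 + 3/2 * x" unfolding T_def by simp

lemma G_le:
  assumes b: "b \<in> {0..3}" and A[measurable]: "A \<in> sets borel"
  shows "emeasure lborel (Gs A \<inter> {b..3}) \<le> ennreal (2/3) * emeasure lborel (A \<inter> {T b..3})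
     + (if b < 1 then ennreal (2/3) * emeasure lborel (A \<inter> {0..3}) else 0)"
proof (cases "b < 1")
  case True
  let ?f1 = "\<lambda>x::real. 3/2 + 3/2 * x" and ?f2 = "\<lambda>x::real. -3/2 + 3/2 * x"
  have sub: "Gs A \<inter> {b..3} \<subseteq> ?f1 -` (A \<inter> {T b..3}) \<union> ?f2 -` (A \<inter> {0..3})"
  proof
    fix x assume x: "x \<in> Gs A \<inter> {b..3}"
    show "x \<in> ?f1 -` (A \<inter> {T b..3}) \<union> ?f2 -` (A \<inter> {0..3})"
    proof (cases "x < 1")
      case True
      then show ?thesis using x \<open>b < 1\<close> T_lt1[of x] T_lt1[of b] unfolding Gs_def by auto
    next
      case False
      then show ?thesis using x T_ge1[of x] unfolding Gs_def by auto
    qed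
  qed
  have "emeasure lborel (Gs A \<inter> {b..3}) \<le> emeasure lborel (?f1 -` (A \<inter> {T b..3}) \<union> ?f2 -` (A \<inter> {0..3}))"
    by (rule emeasure_mono[OF sub]) (auto intro!: aff_pre)
  also have "\<dots> \<le> emeasure lborel (?f1 -` (A \<inter> {T b..3})) + emeasure lborel (?f2 -` (A \<inter> {0..3}))"
    by (rule emeasure_subadditive) (auto intro!: aff_pre)
  also have "\<dots> = ennreal (2/3) * emeasure lborel (A \<inter> {T b..3}) + ennreal (2/3) * emeasure lborel (A \<inter> {0..3})"
    by ((subst aff, simp, measurable)+)
  finally show ?thesis using True by simp
next
  case False
  let ?f2 = "\<lambda>x::real. -3/2 + 3/2 * x"
  have sub: "Gs A \<inter> {b..3} \<subseteq> ?f2 -` (A \<inter> {T b..3})"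
    using False b T_ge1 unfolding Gs_def by auto
  have "emeasure lborel (Gs A \<inter> {b..3}) \<le> emeasure lborel (?f2 -` (A \<inter> {T b..3}))"
    by (rule emeasure_mono[OF sub]) (auto intro!: aff_pre)
  also have "\<dots> = ennreal (2/3) * emeasure lborel (A \<inter> {T b..3})"
    by (subst aff, simp, measurable)
  finally show ?thesis using False by simp
qed


lemma ennreal_suminf_head: "(\<Sum>n. f n :: ennreal) = f 0 + (\<Sum>n. f (Suc n))"
  using sums_unique[OF sums_Suc[OF summable_sums[OF summableI[of "\<lambda>n. f (Suc n)"]]]]
  by (simp add: add.commute)

definition orb :: "nat \<Rightarrow> real" where "orb j = (T ^^ j) 0"

lemma orb_range: "orb j \<in> {0..3}"
  unfolding orb_def by (rule Tn_range) simp

lemma orb_0: "orb 0 = 0" unfolding orb_def by simp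
lemma orb_Suc: "orb (Suc j) = T (orb j)" unfolding orb_def by simp

definition dd :: "nat \<Rightarrow> real" where "dd j = (if orb j < 1 then (2/3)^(Suc j) else 0)"

lemma dsum_eq: "(\<Sum>j<n. dd j) = 1 - (2/3)^n * (1 - orb n / 3)"
proof (induction n)
  case 0 then show ?case by (simp add: orb_0)
next
  case (Suc n)
  show ?case
  proof (cases "orb n < 1")
    case True
    have d: "dd n = 2/3 * (2/3)^n" using True by (simp add: dd_def)
    have o: "orb (Suc n) = 3/2 + 3/2 * orb n" using True by (simp add: orb_Suc T_lt1)
    have key: "\<And>s p w::real. s = 1 - p*(1 - w/3) \<Longrightarrow> s + 2/3*p = 1 - (2/3*p)*(1 - (3/2 + 3/2*w)/3)"
      by (simp add: field_simps)
    show ?thesis using key[OF Suc] d o by simp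
  next
    case False
    have d: "dd n = 0" using False by (simp add: dd_def)
    have o: "orb (Suc n) = -3/2 + 3/2 * orb n" using False by (simp add: orb_Suc T_ge1)
    have key: "\<And>s p w::real. s = 1 - p*(1 - w/3) \<Longrightarrow> s = 1 - (2/3*p)*(1 - (-3/2 + 3/2*w)/3)"
      by (simp add: field_simps)
    show ?thesis using key[OF Suc] d o by simp
  qed
qed

lemma dd_nonneg: "0 \<le> dd j" unfolding dd_def by simp

lemma dd_summable: "summable dd"
proof (rule summable_comparison_test[of _ "\<lambda>j. (2/3::real)^(Suc j)"])
  show "\<exists>N. \<forall>n\<ge>N. norm (dd n) \<le> (2/3)^(Suc n)" unfolding dd_def by auto
  show "summable (\<lambda>j. (2/3::real)^(Suc j))"
    by (subst summable_Suc_iff) (rule summable_geometric, simp)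
qed

lemma dd_suminf: "suminf dd \<le> 1"
proof (rule suminf_le_const[OF dd_summable])
  fix n
  have "(2/3::real)^n * (1 - orb n / 3) \<ge> 0" using orb_range[of n] by auto
  then show "sum dd {..<n} \<le> 1" by (simp add: dsum_eq)
qed

definition F :: "real set \<Rightarrow> ennreal" where
  "F A = (\<Sum>j. ennreal ((2/3)^j) * emeasure lborel (A \<inter> {orb j..3}))"

lemma F_G:
  assumes A[measurable]: "A \<in> sets borel"
  shows "F (Gs A) \<le> F A"
proof -
  let ?m = "\<lambda>j. emeasure lborel (A \<inter> {orb j..3})"
  let ?M = "emeasure lborel (A \<inter> {0..3})"
  have G': "\<And>j. emeasure lborel (Gs A \<inter> {orb j..3}) \<le> ennreal (2/3) * ?m (Suc j) + (if orb j < 1 then ennreal (2/3) * ?M else 0)"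
    using G_le[OF orb_range A] by (simp add: orb_Suc)
  have "F (Gs A) \<le> (\<Sum>j. ennreal ((2/3)^j) * (ennreal (2/3) * ?m (Suc j) + (if orb j < 1 then ennreal (2/3) * ?M else 0)))"
    unfolding F_def
    apply (rule suminf_le) apply (rule mult_left_mono[OF G']) by auto
  also have "\<dots> = (\<Sum>j. ennreal ((2/3)^(Suc j)) * ?m (Suc j) + ennreal (dd j) * ?M)"
    by (intro suminf_cong) (auto simp: dd_def distrib_left ennreal_mult[symmetric] mult.assoc[symmetric] mult.commute[of _ 2])
  also have "\<dots> = (\<Sum>j. ennreal ((2/3)^(Suc j)) * ?m (Suc j)) + (\<Sum>j. ennreal (dd j)) * ?M"
    by (subst suminf_add[symmetric]) auto
  also have "(\<Sum>j. ennreal (dd j)) = ennreal (suminf dd)"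
    by (rule suminf_ennreal2[OF dd_nonneg dd_summable])
  also have "ennreal (suminf dd) * ?M \<le> 1 * ?M"
    by (intro mult_right_mono) (auto simp: dd_suminf)
  also have "(\<Sum>j. ennreal ((2/3)^(Suc j)) * ?m (Suc j)) + 1 * ?M = F A"
    unfolding F_def by (subst (2) ennreal_suminf_head) (simp add: orb_0 add.commute)
  finally show ?thesis by - (simp add: add_left_mono)
qed


lemma F_ge0: "emeasure lborel (A \<inter> {0..3}) \<le> F A"
proof -
  have "F A = ennreal ((2/3)^0) * emeasure lborel (A \<inter> {orb 0..3}) + (\<Sum>j. ennreal ((2/3)^Suc j) * emeasure lborel (A \<inter> {orb (Suc j)..3}))"
    unfolding F_def by (rule ennreal_suminf_head)
  then show ?thesis by (simp add: orb_0)
qed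

lemma mu_le:
  assumes "A \<in> sets borel"
  shows "emeasure lborel {x\<in>{0..3}. (T ^^ n) x \<in> A} \<le> F A"
  using assms
proof (induction n arbitrary: A)
  case 0
  have "{x\<in>{0..3}. (T ^^ 0) x \<in> A} = A \<inter> {0..3}" by auto
  then show ?case using F_ge0 by simp
next
  case (Suc n)
  have "{x\<in>{0..3}. (T ^^ Suc n) x \<in> A} = {x\<in>{0..3}. (T ^^ n) x \<in> Gs A}"
    using Tn_range unfolding Gs_def by auto
  then have "emeasure lborel {x\<in>{0..3}. (T ^^ Suc n) x \<in> A} \<le> F (Gs A)"
    using Suc.IH[of "Gs A"] Suc.prems by simp
  also have "\<dots> \<le> F A" using F_G[OF Suc.prems] .
  finally show ?case .
qed

lemma F_Icc:
  assumes "c \<le> d"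
  shows "F {c..d} \<le> ennreal (3 * (d - c))"
proof -
  have "F {c..d} \<le> (\<Sum>j. ennreal ((2/3)^j) * ennreal (d - c))"
    unfolding F_def
  proof (rule suminf_le)
    fix j
    have "emeasure lborel ({c..d} \<inter> {orb j..3}) \<le> emeasure lborel {c..d}"
      by (rule emeasure_mono) auto
    then show "ennreal ((2/3)^j) * emeasure lborel ({c..d} \<inter> {orb j..3}) \<le> ennreal ((2/3)^j) * ennreal (d - c)"
      using assms by (intro mult_left_mono) auto
  qed auto
  also have "\<dots> = (\<Sum>j. ennreal ((2/3)^j)) * ennreal (d - c)"
    by simp
  also have "(\<Sum>j. ennreal ((2/3::real)^j)) = ennreal (\<Sum>j. (2/3::real)^j)"
    by (rule suminf_ennreal2) (auto intro: summable_geometric)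
  also have "(\<Sum>j. (2/3::real)^j) = 3"
    by (subst suminf_geometric) auto
  finally have *: "F {c..d} \<le> 3 * ennreal (d - c)" by simp
  have eq: "ennreal (3 * (d - c)) = 3 * ennreal (d - c)" using ennreal_mult[of 3 "d-c"] assms by simp
  show ?thesis by (subst eq) (rule *)
qed

definition E :: "real \<Rightarrow> nat \<Rightarrow> real set" where
  "E q n = {x\<in>{0..3}. (T ^^ n) x \<in> {1 - q^n..1 + q^n}}"

lemma E_meas[measurable]: "E q n \<in> sets borel"
proof -
  have "(T ^^ n) -` {1 - q^n..1 + q^n} \<in> sets borel"
    using measurable_sets[OF Tn_meas, of "{1 - q^n..1 + q^n}"] by simp
  moreover have "E q n = (T ^^ n) -` {1 - q^n..1 + q^n} \<inter> {0..3}" unfolding E_def by auto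
  ultimately show ?thesis by simp
qed

lemma E_le:
  assumes "0 < q"
  shows "emeasure lborel (E q n) \<le> ennreal (6 * q^n)"
proof -
  have "emeasure lborel (E q n) \<le> F {1 - q^n..1 + q^n}"
    unfolding E_def by (rule mu_le) simp
  also have "\<dots> \<le> ennreal (3 * ((1 + q^n) - (1 - q^n)))"
    using assms by (intro F_Icc) simp
  finally show ?thesis by simp
qed

lemma AE_E:
  assumes "0 < q" "q < 1"
  shows "AE x in lborel. eventually (\<lambda>n. x \<notin> E q n) sequentially"
proof -
  have fin: "emeasure lborel (E q n) < \<infinity>" for n
    using E_le[OF assms(1), of n] by (simp add: le_less_trans)
  have mle: "measure lborel (E q n) \<le> 6 * q^n" for n
    using E_le[OF assms(1), of n] assms(1) by (simp add: measure_def enn2real_leI)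
  have "summable (\<lambda>n. measure lborel (E q n))"
  proof (rule summable_comparison_test[of _ "\<lambda>n. 6 * q^n"])
    show "\<exists>N. \<forall>n\<ge>N. norm (measure lborel (E q n)) \<le> 6 * q ^ n" using mle by auto
    show "summable (\<lambda>n. 6 * q^n)" using assms by (intro summable_mult summable_geometric) auto
  qed
  from borel_cantelli_AE1[of "E q" lborel, OF _ fin this]
  show ?thesis by simp
qed


lemma AE_Z: "AE x in lborel. \<forall>n. x \<in> {0..3} \<longrightarrow> (T ^^ n) x \<noteq> 1"
proof (subst AE_all_countable, intro allI)
  fix n
  let ?Z = "{x\<in>{0..3}. (T ^^ n) x \<in> {1..1}}"
  have "?Z = (T ^^ n) -` {1..1} \<inter> {0..3}" by auto
  moreover have "(T ^^ n) -` {1..1} \<in> sets borel"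
    using measurable_sets[OF Tn_meas, of "{1..1}"] by simp
  ultimately have Zm: "?Z \<in> sets borel" by simp
  have "emeasure lborel ?Z \<le> F {1..1}" by (rule mu_le) simp
  also have "\<dots> \<le> ennreal (3 * (1 - 1))" by (rule F_Icc) simp
  finally have "emeasure lborel ?Z = 0" by simp
  then have "?Z \<in> null_sets lborel" using Zm by (simp add: null_sets_def)
  from AE_not_in[OF this] show "AE x in lborel. x \<in> {0..3} \<longrightarrow> (T ^^ n) x \<noteq> 1"
    by eventually_elim auto
qed

lemma diff_agree:
  assumes "\<forall>i<n. delta i x = delta i y"
  shows "(T ^^ n) y - (T ^^ n) x = (3/2)^n * (y - x)"
  using assms
proof (induction n)
  case 0 then show ?case by simp
next
  case (Suc n)
  then have IH: "(T ^^ n) y - (T ^^ n) x = (3/2)^n * (y - x)" by simp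
  have same: "((T ^^ n) x < 1) = ((T ^^ n) y < 1)" using Suc.prems unfolding delta_def by auto
  show ?case
  proof (cases "(T ^^ n) x < 1")
    case True
    then show ?thesis using same IH by (simp add: T_lt1 algebra_simps)
  next
    case False
    then show ?thesis using same IH by (simp add: T_ge1 algebra_simps)
  qed
qed

lemma kx_props:
  assumes x: "x \<in> {0..3}" and y: "x + \<epsilon> \<in> {0..3}" and e: "\<epsilon> \<noteq> 0"
  shows "delta (kx x \<epsilon>) x \<noteq> delta (kx x \<epsilon>) (x + \<epsilon>)"
    and "\<forall>i<kx x \<epsilon>. delta i x = delta i (x + \<epsilon>)"
proof -
  have bound: "(3/2)^n * \<bar>\<epsilon>\<bar> \<le> 3" if "\<forall>i<n. delta i x = delta i (x + \<epsilon>)" for n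
  proof -
    have "(T ^^ n) (x + \<epsilon>) - (T ^^ n) x = (3/2)^n * \<epsilon>" using diff_agree[OF that] by simp
    moreover have "(T ^^ n) (x + \<epsilon>) \<in> {0..3}" "(T ^^ n) x \<in> {0..3}" using Tn_range x y by auto
    ultimately have "\<bar>(3/2)^n * \<epsilon>\<bar> \<le> 3" by auto
    then show ?thesis by (simp add: abs_mult)
  qed
  have ex: "\<exists>n. delta n x \<noteq> delta n (x + \<epsilon>)"
  proof (rule ccontr)
    assume "\<not> ?thesis"
    then have all: "\<forall>i<n. delta i x = delta i (x + \<epsilon>)" for n by auto
    obtain n where n: "3 / \<bar>\<epsilon>\<bar> < (3/2::real)^n" using real_arch_pow[of "3/2" "3 / \<bar>\<epsilon>\<bar>"] by auto
    have "(3/2)^n * \<bar>\<epsilon>\<bar> \<le> 3" using bound[OF all] .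
    with n e show False by (simp add: divide_less_eq)
  qed
  show "delta (kx x \<epsilon>) x \<noteq> delta (kx x \<epsilon>) (x + \<epsilon>)"
    unfolding kx_def using LeastI_ex[OF ex] .
  show "\<forall>i<kx x \<epsilon>. delta i x = delta i (x + \<epsilon>)"
    unfolding kx_def using not_less_Least by blast
qed

lemma kx_upper:
  assumes x: "x \<in> {0..3}" and y: "x + \<epsilon> \<in> {0..3}" and e: "\<epsilon> \<noteq> 0"
  shows "(3/2)^(kx x \<epsilon>) * \<bar>\<epsilon>\<bar> \<le> 3"
proof -
  let ?k = "kx x \<epsilon>"
  have "(T ^^ ?k) (x + \<epsilon>) - (T ^^ ?k) x = (3/2)^?k * \<epsilon>" using diff_agree[OF kx_props(2)[OF assms]] by simp
  moreover have "(T ^^ ?k) (x + \<epsilon>) \<in> {0..3}" "(T ^^ ?k) x \<in> {0..3}" using Tn_range x y by auto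
  ultimately have "\<bar>(3/2)^?k * \<epsilon>\<bar> \<le> 3" by auto
  then show ?thesis by (simp add: abs_mult)
qed

lemma kx_near:
  assumes x: "x \<in> {0..3}" and y: "x + \<epsilon> \<in> {0..3}" and e: "\<epsilon> \<noteq> 0"
  shows "\<bar>(T ^^ kx x \<epsilon>) x - 1\<bar> \<le> (3/2)^(kx x \<epsilon>) * \<bar>\<epsilon>\<bar>"
proof -
  let ?k = "kx x \<epsilon>"
  have d: "(T ^^ ?k) (x + \<epsilon>) - (T ^^ ?k) x = (3/2)^?k * \<epsilon>" using diff_agree[OF kx_props(2)[OF assms]] by simp
  have "((T ^^ ?k) x < 1) \<noteq> ((T ^^ ?k) (x + \<epsilon>) < 1)" using kx_props(1)[OF assms] unfolding delta_def .
  then have "\<bar>(T ^^ ?k) x - 1\<bar> \<le> \<bar>(T ^^ ?k) (x + \<epsilon>) - (T ^^ ?k) x\<bar>" by auto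
  then show ?thesis using d by (simp add: abs_mult)
qed


lemma main_det:
  assumes x: "x \<in> {0<..<3}" and Z: "\<forall>n. x \<in> {0..3} \<longrightarrow> (T ^^ n) x \<noteq> 1"
    and Eg: "\<forall>m. eventually (\<lambda>n. x \<notin> E ((2/3) powr (1 / real (Suc m))) n) sequentially"
  shows "((\<lambda>\<epsilon>. real (kx x \<epsilon>) / log (2/3) \<bar>\<epsilon>\<bar>) \<longlongrightarrow> 1) (at 0)"
proof (rule tendstoI)
  fix e :: real assume e: "e > 0"
  obtain m where m: "inverse (real (Suc m)) < e" using reals_Archimedean[OF e] by auto
  define qq where "qq = (2/3::real) powr (1 / real (Suc m))"
  have qq0: "qq > 0" unfolding qq_def by simp
  obtain N where N: "\<And>n. n \<ge> N \<Longrightarrow> x \<notin> E qq n"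
    using Eg[rule_format, of m] unfolding qq_def eventually_sequentially by auto
  define a where "a = ln (3/2::real)"
  have a0: "a > 0" unfolding a_def by simp
  have ln23: "ln (2/3::real) = - a" unfolding a_def by (simp add: ln_div)
  define C where "C = ln 3 / a"
  have C0: "C > 0" unfolding C_def using a0 by simp
  have x03: "x \<in> {0..3}" using x by auto
  define S where "S = insert 1 ((\<lambda>n. \<bar>(T ^^ n) x - 1\<bar>) ` {..<N})"
  define d0 where "d0 = Min S"
  have d0: "d0 > 0" unfolding d0_def S_def using Z x03 by (subst Min_gr_iff) auto
  have d0le: "\<And>n. n < N \<Longrightarrow> d0 \<le> \<bar>(T ^^ n) x - 1\<bar>" unfolding d0_def S_def by (intro Min_le) auto
  define \<delta> where "\<delta> = min (min x (3 - x)) (min (d0 * (2/3)^N) (exp (- (C / e) * a)))"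
  have \<delta>0: "\<delta> > 0" unfolding \<delta>_def using x d0 by auto
  show "eventually (\<lambda>\<epsilon>. dist (real (kx x \<epsilon>) / log (2/3) \<bar>\<epsilon>\<bar>) 1 < e) (at 0)"
    unfolding eventually_at
  proof (intro exI[of _ \<delta>] conjI ballI impI)
    show "\<delta> > 0" by (rule \<delta>0)
    fix \<epsilon> :: real assume "\<epsilon> \<noteq> 0 \<and> dist \<epsilon> 0 < \<delta>"
    then have ne: "\<epsilon> \<noteq> 0" and small: "\<bar>\<epsilon>\<bar> < \<delta>" by auto
    have y03: "x + \<epsilon> \<in> {0..3}" using small unfolding \<delta>_def by auto
    define k where "k = kx x \<epsilon>"
    define l where "l = ln \<bar>\<epsilon>\<bar>"
    define L where "L = log (2/3) \<bar>\<epsilon>\<bar>"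
    have L: "L = - l / a" unfolding L_def l_def log_def ln23 by simp
    have "\<bar>\<epsilon>\<bar> < exp (- (C / e) * a)" using small unfolding \<delta>_def by auto
    then have "ln \<bar>\<epsilon>\<bar> < ln (exp (- (C / e) * a))" using ne by (subst ln_less_cancel_iff) auto
    then have "l < - (C / e) * a" unfolding l_def by simp
    then have LCe: "L > C / e" unfolding L using a0 by (simp add: field_simps)
    then have L0: "L > 0" using C0 e by (smt (verit) divide_pos_pos)
    have up: "(3/2)^k * \<bar>\<epsilon>\<bar> \<le> 3" unfolding k_def by (rule kx_upper[OF x03 y03 ne])
    then have "ln ((3/2)^k * \<bar>\<epsilon>\<bar>) \<le> ln 3" using ne by (subst ln_le_cancel_iff) auto
    then have "k * a + l \<le> ln 3" using ne unfolding a_def l_def by (simp add: ln_mult ln_realpow)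
    then have kup: "k \<le> C + L" unfolding C_def L using a0 by (simp add: field_simps)
    have near: "\<bar>(T ^^ k) x - 1\<bar> \<le> (3/2)^k * \<bar>\<epsilon>\<bar>" unfolding k_def by (rule kx_near[OF x03 y03 ne])
    have kN: "k \<ge> N"
    proof (rule ccontr)
      assume "\<not> k \<ge> N"
      then have kN: "k < N" by simp
      have "(3/2::real)^k \<le> (3/2)^N" using kN by (intro power_increasing) auto
      moreover have "\<bar>\<epsilon>\<bar> < d0 * (2/3)^N" using small unfolding \<delta>_def by auto
      ultimately have "(3/2)^k * \<bar>\<epsilon>\<bar> < (3/2)^N * (d0 * (2/3)^N)"
        by (intro mult_le_less_imp_less) (auto simp: ne)
      also have "\<dots> = d0" by (simp add: power_mult_distrib[symmetric])
      finally show False using near d0le[OF kN] by simp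
    qed
    have "x \<notin> E qq k" using N[OF kN] .
    then have "(T ^^ k) x \<notin> {1 - qq^k..1 + qq^k}" using x03 unfolding E_def by auto
    then have "qq^k < (3/2)^k * \<bar>\<epsilon>\<bar>" using near by auto
    then have "ln (qq^k) < ln ((3/2)^k * \<bar>\<epsilon>\<bar>)" using qq0 ne by (subst ln_less_cancel_iff) auto
    moreover have "ln (qq^k) = - (k * a / real (Suc m))" unfolding qq_def using ln23
      by (simp add: ln_realpow ln_powr)
    moreover have "ln ((3/2)^k * \<bar>\<epsilon>\<bar>) = k * a + l" using ne unfolding a_def l_def by (simp add: ln_mult ln_realpow)
    ultimately have "- (k * a / real (Suc m)) < k * a + l" by simp
    then have "- l < k * a * (1 + 1 / real (Suc m))" by (simp add: field_simps)
    then have klow: "L < k * (1 + 1 / real (Suc m))" unfolding L using a0 by (simp add: field_simps)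
    have r1: "k / L \<le> 1 + C / L" using kup L0 by (simp add: field_simps)
    have r2: "C / L < e" using LCe C0 e L0 by (simp add: field_simps)
    have r3: "k / L > 1 / (1 + 1 / real (Suc m))" using klow L0 by (simp add: field_simps)
    have r4: "1 / (1 + 1 / real (Suc m)) \<ge> 1 - inverse (real (Suc m))"
      by (simp add: field_simps)
    have "\<bar>k / L - 1\<bar> < e" using r1 r2 r3 r4 m by linarith
    then show "dist (real (kx x \<epsilon>) / log (2/3) \<bar>\<epsilon>\<bar>) 1 < e"
      unfolding k_def L_def dist_real_def by simp
  qed
qed

theorem lemma6p1:
  shows "AE x in lborel. x \<in> {0<..<3} \<longrightarrow>
           ((\<lambda>\<epsilon>. real (kx x \<epsilon>) / log (2/3) \<bar>\<epsilon>\<bar>) \<longlongrightarrow> 1) (at 0)"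
proof -
  have "AE x in lborel. \<forall>m. eventually (\<lambda>n. x \<notin> E ((2/3) powr (1 / real (Suc m))) n) sequentially"
  proof (subst AE_all_countable, intro allI)
    fix m
    have "(2/3::real) powr (1 / real (Suc m)) < 1"
    proof -
      have "(2/3::real) powr (1 / real (Suc m)) < (2/3) powr 0"
        by (rule powr_less_mono') auto
      then show ?thesis by simp
    qed
    then show "AE x in lborel. eventually (\<lambda>n. x \<notin> E ((2/3) powr (1 / real (Suc m))) n) sequentially"
      by (intro AE_E) auto
  qed
  with AE_Z show ?thesis
    by eventually_elim (auto intro: main_det)
qed

end
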